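(* Let $y=Dx+w$ as in the context with $x\ne0$, and suppose that $\max_{1\le j\le M}\|D[j]^*w\|_2<\tau$ for some $\tau>0$. If $$(1-(d-1)\nu)x_{\max}>2\tau+(2s-1)d\mu_Bx_{\max},$$ then $\max_{j\in S}\|D[j]^*y\|_2>\max_{j\notin S}\|D[j]^*y\|_2$. If instead the stronger condition $$(1-(d-1)\nu)x_{\min}>2\tau+(2s-1)d\mu_Bx_{\max}$$ holds, then $\min_{j\in S}\|D[j]^*y\|_2>\max_{j\notin S}\|D[j]^*y\|_2$.
   Context: Setting: $N=Md$. For $v\in\mathbb{C}^N$, $v[i]=(v_{(i-1)d+1},\dots,v_{id})^T$ is its $i$-th block ($1\le i\le M$); for a matrix $A$ with $N$ columns, $A[i]$ is the submatrix of columns $(i-1)d+1,\dots,id$. The block support is $\mathrm{supp}(v)=\{i:v[i]\ne0\}$. $x\in\mathbb{C}^N$, $S=\mathrm{supp}(x)$, $s=|S|$, $x_{\max}=\max_{i\in S}\|x[i]\|_2$, $x_{\min}=\min_{i\in S}\|x[i]\|_2$. $D\in\mathbb{C}^{L\times N}$ has columns $d_1,\dots,d_N$ with $\|d_i\|_2=1$; $w\in\mathbb{C}^L$ arbitrary. Block coherence $\mu_B=\max_{i\ne j}\frac1d\|D[i]^*D[j]\|$ (spectral norm); sub-coherence $\nu=\max_{1\le\ell\le M}\max_{(\ell-1)d+1\le i\ne j\le\ell d}|d_i^*d_j|$. *)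

theory Defs
  imports Complex_Main
begin

text \<open>Conventions: indices are 0-based. A vector in C^N is a function nat => complex,
  only its values at 0..N-1 matter. A matrix D in C^(L x N) is D :: nat => nat => complex,
  D r c being the entry in row r < L, column c < N. With N = M*d, block i (i < M) of a
  vector consists of the entries i*d, ..., i*d + d - 1; D[i] consists of those columns.\<close>

definition vec2norm :: "nat \<Rightarrow> (nat \<Rightarrow> complex) \<Rightarrow> real" where
  "vec2norm n v = sqrt (\<Sum>k<n. (cmod (v k))\<^sup>2)"

definition blk :: "nat \<Rightarrow> (nat \<Rightarrow> complex) \<Rightarrow> nat \<Rightarrow> (nat \<Rightarrow> complex)" where
  "blk d v i = (\<lambda>k. v (i * d + k))"

definition blk_supp :: "nat \<Rightarrow> nat \<Rightarrow> (nat \<Rightarrow> complex) \<Rightarrow> nat set" where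
  "blk_supp M d v = {i. i < M \<and> (\<exists>k<d. v (i * d + k) \<noteq> 0)}"

definition mat_vec :: "nat \<Rightarrow> (nat \<Rightarrow> nat \<Rightarrow> complex) \<Rightarrow> (nat \<Rightarrow> complex) \<Rightarrow> (nat \<Rightarrow> complex)" where
  "mat_vec N D x = (\<lambda>r. \<Sum>c<N. D r c * x c)"

definition blk_adj_vec :: "nat \<Rightarrow> nat \<Rightarrow> (nat \<Rightarrow> nat \<Rightarrow> complex) \<Rightarrow> nat \<Rightarrow> (nat \<Rightarrow> complex) \<Rightarrow> (nat \<Rightarrow> complex)" where
  "blk_adj_vec L d D j y = (\<lambda>k. \<Sum>r<L. cnj (D r (j * d + k)) * y r)"

definition blk_gram :: "nat \<Rightarrow> nat \<Rightarrow> (nat \<Rightarrow> nat \<Rightarrow> complex) \<Rightarrow> nat \<Rightarrow> nat \<Rightarrow> (nat \<Rightarrow> nat \<Rightarrow> complex)" where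
  "blk_gram L d D i j = (\<lambda>k l. \<Sum>r<L. cnj (D r (i * d + k)) * D r (j * d + l))"

definition spec_norm :: "nat \<Rightarrow> (nat \<Rightarrow> nat \<Rightarrow> complex) \<Rightarrow> real" where
  "spec_norm n A = Sup {vec2norm n (\<lambda>k. \<Sum>l<n. A k l * v l) | v. vec2norm n v \<le> 1}"

text \<open>block coherence; maximum over an empty index set (M = 1) taken to be 0\<close>
definition block_coherence :: "nat \<Rightarrow> nat \<Rightarrow> nat \<Rightarrow> (nat \<Rightarrow> nat \<Rightarrow> complex) \<Rightarrow> real" where
  "block_coherence L M d D =
     Max (insert 0 {spec_norm d (blk_gram L d D i j) / real d | i j. i < M \<and> j < M \<and> i \<noteq> j})"

text \<open>sub-coherence; maximum over an empty index set (d = 1) taken to be 0\<close>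
definition sub_coherence :: "nat \<Rightarrow> nat \<Rightarrow> nat \<Rightarrow> (nat \<Rightarrow> nat \<Rightarrow> complex) \<Rightarrow> real" where
  "sub_coherence L M d D =
     Max (insert 0 {cmod (\<Sum>r<L. cnj (D r (l * d + a)) * D r (l * d + b)) | l a b.
                      l < M \<and> a < d \<and> b < d \<and> a \<noteq> b})"

definition max0 :: "nat set \<Rightarrow> (nat \<Rightarrow> real) \<Rightarrow> real" where
  "max0 A f = Max (insert 0 (f ` A))"

end

theory Submission imports Defs "HOL-Analysis.L2_Norm" begin
lemma regroup: fixes M d :: nat shows "(\<Sum>c<M*d. g c) = (\<Sum>i<M. \<Sum>l<d. g (i*d+l))"
proof -
  have "(\<Sum>c<M*d. g c) = (\<Sum>i<M. sum g {i*d..<i*d+d})" using sum.nat_group[where g=g and k=d and n=M] by simp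
  also have "\<dots> = (\<Sum>i<M. \<Sum>l<d. g (i*d+l))"
  proof (rule sum.cong, simp)
    fix x
    show "sum g {x*d..<x*d+d} = (\<Sum>l<d. g (x*d+l))"
      using sum.shift_bounds_nat_ivl[of g 0 "x*d" d] by (simp add: atLeast0LessThan add.commute)
  qed
  finally show ?thesis .
qed

lemma nrm_L2: "vec2norm n v = L2_set (\<lambda>k. cmod (v k)) {..<n}"
  by (simp add: vec2norm_def L2_set_def)

lemma nrm_nonneg: "0 \<le> vec2norm n v" by (simp add: nrm_L2)

lemma nrm_cong: "(\<And>k. k < n \<Longrightarrow> u k = v k) \<Longrightarrow> vec2norm n u = vec2norm n v"
  unfolding vec2norm_def by (intro arg_cong[where f=sqrt] sum.cong) auto

lemma nrm_add: "vec2norm n (\<lambda>k. u k + v k) \<le> vec2norm n u + vec2norm n v"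
proof -
  have "vec2norm n (\<lambda>k. u k + v k) \<le> L2_set (\<lambda>k. cmod (u k) + cmod (v k)) {..<n}"
    unfolding nrm_L2 by (rule L2_set_mono) (simp_all add: norm_triangle_ineq)
  also have "\<dots> \<le> vec2norm n u + vec2norm n v"
    unfolding nrm_L2 by (rule L2_set_triangle_ineq)
  finally show ?thesis .
qed

lemma nrm_sum: "finite I \<Longrightarrow> vec2norm n (\<lambda>k. \<Sum>i\<in>I. f i k) \<le> (\<Sum>i\<in>I. vec2norm n (f i))"
proof (induction I rule: finite_induct)
  case empty then show ?case by (simp add: vec2norm_def)
next
  case (insert a F)
  have "vec2norm n (\<lambda>k. \<Sum>i\<in>insert a F. f i k) = vec2norm n (\<lambda>k. f a k + (\<Sum>i\<in>F. f i k))"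
    using insert by simp
  also have "\<dots> \<le> vec2norm n (f a) + vec2norm n (\<lambda>k. \<Sum>i\<in>F. f i k)" by (rule nrm_add)
  also have "\<dots> \<le> vec2norm n (f a) + (\<Sum>i\<in>F. vec2norm n (f i))" using insert by simp
  finally show ?case using insert by simp
qed

lemma nrm_comp: "k < n \<Longrightarrow> cmod (v k) \<le> vec2norm n v"
  unfolding nrm_L2 by (rule member_le_L2_set) auto

lemma nrm_scale: "vec2norm n (\<lambda>k. c * v k) = cmod c * vec2norm n v"
  unfolding nrm_L2 by (simp add: norm_mult L2_set_right_distrib)

definition app :: "nat \<Rightarrow> (nat \<Rightarrow> nat \<Rightarrow> complex) \<Rightarrow> (nat \<Rightarrow> complex) \<Rightarrow> (nat \<Rightarrow> complex)" where
  "app n A v = (\<lambda>k. \<Sum>l<n. A k l * v l)"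

lemma app_bound: "vec2norm n (app n A v) \<le> spec_norm n A * vec2norm n v"
proof -
  let ?T = "{vec2norm n (\<lambda>k. \<Sum>l<n. A k l * v l) | v. vec2norm n v \<le> 1}"
  define C where "C = (\<Sum>k<n. \<Sum>l<n. cmod (A k l))"
  have bdd: "bdd_above ?T"
  proof (rule bdd_aboveI[of _ C], clarify)
    fix u assume u: "vec2norm n u \<le> 1"
    have "vec2norm n (\<lambda>k. \<Sum>l<n. A k l * u l) \<le> (\<Sum>k<n. cmod (\<Sum>l<n. A k l * u l))"
      unfolding nrm_L2 by (rule L2_set_le_sum) simp
    also have "\<dots> \<le> (\<Sum>k<n. \<Sum>l<n. cmod (A k l) * cmod (u l))"
    proof (intro sum_mono)
      fix k
      have "cmod (\<Sum>l<n. A k l * u l) \<le> (\<Sum>l<n. cmod (A k l * u l))" by (rule norm_sum)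
      then show "cmod (\<Sum>l<n. A k l * u l) \<le> (\<Sum>l<n. cmod (A k l) * cmod (u l))" by (simp add: norm_mult)
    qed
    also have "\<dots> \<le> C" unfolding C_def
    proof (intro sum_mono)
      fix k l assume "l \<in> {..<n}"
      then have "cmod (u l) \<le> 1" using nrm_comp[of l n u] u by simp
      then show "cmod (A k l) * cmod (u l) \<le> cmod (A k l)"
        by (simp add: mult_left_le)
    qed
    finally show "vec2norm n (\<lambda>k. \<Sum>l<n. A k l * u l) \<le> C" .
  qed
  show ?thesis
  proof (cases "vec2norm n v = 0")
    case True
    then have "\<forall>l<n. v l = 0" unfolding nrm_L2 by (simp add: L2_set_eq_0_iff)
    then have "app n A v = (\<lambda>k. 0)" unfolding app_def by auto
    then show ?thesis using True by (simp add: vec2norm_def)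
  next
    case False
    define c where "c = vec2norm n v"
    have cpos: "c > 0" using False nrm_nonneg[of n v] c_def by linarith
    define u where "u = (\<lambda>l. v l / complex_of_real c)"
    have "vec2norm n u = 1"
    proof -
      have "vec2norm n u = vec2norm n (\<lambda>l. complex_of_real (1/c) * v l)"
        unfolding u_def by (rule nrm_cong) (simp add: divide_inverse mult.commute)
      also have "\<dots> = cmod (complex_of_real (1/c)) * c" unfolding nrm_scale c_def by simp
      also have "\<dots> = 1/c * c" using cpos by (simp only: norm_of_real) simp
      finally show ?thesis using cpos by simp
    qed
    then have "vec2norm n (\<lambda>k. \<Sum>l<n. A k l * u l) \<in> ?T" by (intro CollectI exI[of _ u]) simp
    then have le: "vec2norm n (\<lambda>k. \<Sum>l<n. A k l * u l) \<le> spec_norm n A"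
      unfolding spec_norm_def by (rule cSup_upper[OF _ bdd])
    have "app n A v = (\<lambda>k. complex_of_real c * (\<Sum>l<n. A k l * u l))"
      unfolding app_def u_def using cpos by (simp add: sum_distrib_left)
    then have "vec2norm n (app n A v) = c * vec2norm n (\<lambda>k. \<Sum>l<n. A k l * u l)"
      using nrm_scale cpos by simp
    also have "\<dots> \<le> c * spec_norm n A" using le cpos by simp
    finally show ?thesis unfolding c_def by (simp add: mult.commute)
  qed
qed

lemma cnj_self: "cnj z * z = complex_of_real ((cmod z)\<^sup>2)"
  using complex_norm_square[of z] by (simp only: mult.commute)

lemma nrm_sub: "vec2norm n u \<le> vec2norm n (\<lambda>k. u k + r k) + vec2norm n r"
proof -
  have "vec2norm n u = vec2norm n (\<lambda>k. (u k + r k) + (-1) * r k)" by simp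
  also have "\<dots> \<le> vec2norm n (\<lambda>k. u k + r k) + vec2norm n (\<lambda>k. (-1) * r k)" by (rule nrm_add)
  also have "vec2norm n (\<lambda>k. (-1) * r k) = vec2norm n r" by (subst nrm_scale) simp
  finally show ?thesis .
qed

lemma sum_sq_card: "finite T \<Longrightarrow> (\<Sum>l\<in>T. (a l::real))\<^sup>2 \<le> real (card T) * (\<Sum>l\<in>T. (a l)\<^sup>2)"
proof -
  assume fin: "finite T"
  have "\<bar>\<Sum>l\<in>T. a l\<bar> \<le> (\<Sum>l\<in>T. \<bar>1::real\<bar> * \<bar>a l\<bar>)" by (simp add: sum_abs)
  also have "\<dots> \<le> L2_set (\<lambda>_. 1) T * L2_set a T" by (rule L2_set_mult_ineq)
  also have "\<dots> = sqrt (real (card T)) * sqrt (\<Sum>l\<in>T. (a l)\<^sup>2)"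
    by (simp add: L2_set_constant L2_set_def)
  also have "\<dots> = sqrt (real (card T) * (\<Sum>l\<in>T. (a l)\<^sup>2))" by (simp add: real_sqrt_mult)
  finally have "\<bar>\<Sum>l\<in>T. a l\<bar> \<le> sqrt (real (card T) * (\<Sum>l\<in>T. (a l)\<^sup>2))" .
  then have "\<bar>\<Sum>l\<in>T. a l\<bar>\<^sup>2 \<le> (sqrt (real (card T) * (\<Sum>l\<in>T. (a l)\<^sup>2)))\<^sup>2"
    by (rule power_mono) simp
  also have "\<dots> = real (card T) * (\<Sum>l\<in>T. (a l)\<^sup>2)"
    by (simp add: sum_nonneg)
  finally show ?thesis by simp
qed

lemma offdiag:
  fixes A :: "nat \<Rightarrow> nat \<Rightarrow> complex" and \<nu> :: real
  assumes bnd: "\<And>k l. k < n \<Longrightarrow> l < n \<Longrightarrow> k \<noteq> l \<Longrightarrow> cmod (A k l) \<le> \<nu>" and nu: "0 \<le> \<nu>"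
  shows "vec2norm n (\<lambda>k. \<Sum>l\<in>{..<n}-{k}. A k l * v l) \<le> (real n - 1) * \<nu> * vec2norm n v"
proof (cases "n = 0")
  case True then show ?thesis by (simp add: vec2norm_def)
next
  case False
  define a where "a = (\<lambda>l. cmod (v l))"
  define tot where "tot = (\<Sum>l<n. (a l)\<^sup>2)"
  have vn: "vec2norm n v = sqrt tot" unfolding vec2norm_def tot_def a_def by simp
  have h1: "(cmod (\<Sum>l\<in>{..<n}-{k}. A k l * v l))\<^sup>2 \<le> \<nu>\<^sup>2 * (real n - 1) * (tot - (a k)\<^sup>2)"
    if k: "k < n" for k
  proof -
    have "cmod (\<Sum>l\<in>{..<n}-{k}. A k l * v l) \<le> (\<Sum>l\<in>{..<n}-{k}. cmod (A k l * v l))"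
      by (rule norm_sum)
    also have "\<dots> \<le> (\<Sum>l\<in>{..<n}-{k}. \<nu> * a l)"
      unfolding a_def norm_mult by (intro sum_mono mult_right_mono bnd) (auto simp: k)
    also have "\<dots> = \<nu> * (\<Sum>l\<in>{..<n}-{k}. a l)" by (simp add: sum_distrib_left)
    finally have c1: "cmod (\<Sum>l\<in>{..<n}-{k}. A k l * v l) \<le> \<nu> * (\<Sum>l\<in>{..<n}-{k}. a l)" .
    have c2: "(cmod (\<Sum>l\<in>{..<n}-{k}. A k l * v l))\<^sup>2 \<le> (\<nu> * (\<Sum>l\<in>{..<n}-{k}. a l))\<^sup>2"
      by (rule power_mono[OF c1]) simp
    have cardT: "card ({..<n}-{k}) = n - 1" using k by simp
    have c3: "(\<Sum>l\<in>{..<n}-{k}. a l)\<^sup>2 \<le> (real n - 1) * (\<Sum>l\<in>{..<n}-{k}. (a l)\<^sup>2)"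
      using sum_sq_card[of "{..<n}-{k}" a] cardT False by (simp add: of_nat_diff)
    have c4: "(\<Sum>l\<in>{..<n}-{k}. (a l)\<^sup>2) = tot - (a k)\<^sup>2"
      unfolding tot_def using k by (simp add: sum_diff1)
    have "(\<nu> * (\<Sum>l\<in>{..<n}-{k}. a l))\<^sup>2 = \<nu>\<^sup>2 * (\<Sum>l\<in>{..<n}-{k}. a l)\<^sup>2"
      by (simp add: power_mult_distrib)
    also have "\<dots> \<le> \<nu>\<^sup>2 * ((real n - 1) * (tot - (a k)\<^sup>2))"
      using c3 c4 by (intro mult_left_mono) simp_all
    finally show ?thesis using c2 by (simp add: mult.assoc)
  qed
  have "(\<Sum>k<n. (cmod (\<Sum>l\<in>{..<n}-{k}. A k l * v l))\<^sup>2) \<le> (\<Sum>k<n. \<nu>\<^sup>2 * (real n - 1) * (tot - (a k)\<^sup>2))"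
    by (intro sum_mono h1) simp
  also have "\<dots> = \<nu>\<^sup>2 * (real n - 1) * (\<Sum>k<n. tot - (a k)\<^sup>2)"
    by (simp add: sum_distrib_left)
  also have "\<dots> = \<nu>\<^sup>2 * (real n - 1) * (real n * tot - tot)"
    by (simp add: sum_subtractf tot_def[symmetric])
  also have "\<dots> = ((real n - 1) * \<nu> * sqrt tot)\<^sup>2"
  proof -
    have "tot \<ge> 0" unfolding tot_def by (simp add: sum_nonneg)
    then show ?thesis by (simp add: power_mult_distrib algebra_simps power2_eq_square)
  qed
  finally have sq: "(vec2norm n (\<lambda>k. \<Sum>l\<in>{..<n}-{k}. A k l * v l))\<^sup>2 \<le> ((real n - 1) * \<nu> * vec2norm n v)\<^sup>2"
    unfolding vn by (simp add: vec2norm_def sum_nonneg)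
  have "0 \<le> (real n - 1) * \<nu> * vec2norm n v" using False nu nrm_nonneg[of n v] by simp
  then show ?thesis by (rule power2_le_imp_le[OF sq])
qed

lemma decomp:
  fixes M d L :: nat
  assumes S: "S \<subseteq> {..<M}" and zero: "\<And>i l. i < M \<Longrightarrow> i \<notin> S \<Longrightarrow> l < d \<Longrightarrow> x (i*d+l) = 0"
  shows "blk_adj_vec L d D j (\<lambda>r. mat_vec (M * d) D x r + w r)
         = (\<lambda>k. (\<Sum>i\<in>S. app d (blk_gram L d D j i) (blk d x i) k) + blk_adj_vec L d D j w k)"
proof
  fix k
  have finS: "finite S" using S finite_subset by blast
  have "blk_adj_vec L d D j (\<lambda>r. mat_vec (M * d) D x r + w r) k
      = (\<Sum>r<L. \<Sum>c<M*d. cnj (D r (j*d+k)) * D r c * x c) + blk_adj_vec L d D j w k"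
    unfolding blk_adj_vec_def mat_vec_def
    by (simp add: distrib_left sum.distrib sum_distrib_left mult.assoc)
  also have "(\<Sum>r<L. \<Sum>c<M*d. cnj (D r (j*d+k)) * D r c * x c) = (\<Sum>c<M*d. \<Sum>r<L. cnj (D r (j*d+k)) * D r c * x c)"
    by (rule sum.swap)
  also have "\<dots> = (\<Sum>i<M. \<Sum>l<d. \<Sum>r<L. cnj (D r (j*d+k)) * D r (i*d+l) * x (i*d+l))"
    by (rule regroup)
  also have "\<dots> = (\<Sum>i\<in>S. \<Sum>l<d. \<Sum>r<L. cnj (D r (j*d+k)) * D r (i*d+l) * x (i*d+l))"
    by (rule sum.mono_neutral_right) (use S in \<open>auto simp: zero\<close>)
  also have "\<dots> = (\<Sum>i\<in>S. app d (blk_gram L d D j i) (blk d x i) k)"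
    unfolding app_def blk_gram_def blk_def by (simp add: sum_distrib_right)
  finally show "blk_adj_vec L d D j (\<lambda>r. mat_vec (M * d) D x r + w r) k
      = (\<Sum>i\<in>S. app d (blk_gram L d D j i) (blk d x i) k) + blk_adj_vec L d D j w k" .
qed

theorem lemma2:
  fixes L M d :: nat and D :: "nat \<Rightarrow> nat \<Rightarrow> complex" and x w :: "nat \<Rightarrow> complex"
    and \<tau> :: real
  defines "N \<equiv> M * d"
    and "S \<equiv> blk_supp M d x"
    and "s \<equiv> card (blk_supp M d x)"
    and "y \<equiv> (\<lambda>r. mat_vec (M * d) D x r + w r)"
    and "\<mu>B \<equiv> block_coherence L M d D"
    and "\<nu> \<equiv> sub_coherence L M d D"
    and "xmax \<equiv> Max ((\<lambda>i. vec2norm d (blk d x i)) ` blk_supp M d x)"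
    and "xmin \<equiv> Min ((\<lambda>i. vec2norm d (blk d x i)) ` blk_supp M d x)"
  assumes "1 \<le> d" and "1 \<le> M"
    and unit_cols: "\<forall>c<N. (\<Sum>r<L. (cmod (D r c))\<^sup>2) = 1"
    and x_nz: "\<exists>c<N. x c \<noteq> 0"
    and tau_pos: "\<tau> > 0"
    and noise: "\<forall>j<M. vec2norm d (blk_adj_vec L d D j w) < \<tau>"
  shows "((1 - (real d - 1) * \<nu>) * xmax > 2 * \<tau> + (2 * real s - 1) * real d * \<mu>B * xmax
            \<longrightarrow> Max ((\<lambda>j. vec2norm d (blk_adj_vec L d D j y)) ` S)
                > max0 ({..<M} - S) (\<lambda>j. vec2norm d (blk_adj_vec L d D j y)))
       \<and> ((1 - (real d - 1) * \<nu>) * xmin > 2 * \<tau> + (2 * real s - 1) * real d * \<mu>B * xmax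
            \<longrightarrow> Min ((\<lambda>j. vec2norm d (blk_adj_vec L d D j y)) ` S)
                > max0 ({..<M} - S) (\<lambda>j. vec2norm d (blk_adj_vec L d D j y)))"
proof -
  let ?f = "\<lambda>j. vec2norm d (blk_adj_vec L d D j y)"
  let ?nx = "\<lambda>i. vec2norm d (blk d x i)"
  let ?G = "\<lambda>i j. blk_gram L d D i j"
  have Ssub: "S \<subseteq> {..<M}" by (auto simp: S_def blk_supp_def)
  have finS: "finite S" using Ssub finite_subset by blast
  have zero: "\<And>i l. i < M \<Longrightarrow> i \<notin> S \<Longrightarrow> l < d \<Longrightarrow> x (i*d+l) = 0"
    by (auto simp: S_def blk_supp_def)
  have Sne: "S \<noteq> {}"
  proof -
    obtain c where c: "c < N" "x c \<noteq> 0" using x_nz by blast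
    have dpos: "0 < d" using assms(9) by simp
    have i: "c div d < M" using c(1) unfolding N_def
      by (metis dpos less_mult_imp_div_less mult.commute)
    have "c = (c div d) * d + c mod d" by simp
    then have "x ((c div d) * d + c mod d) \<noteq> 0" using c by metis
    moreover have "c mod d < d" using dpos by simp
    ultimately have "c div d \<in> S" using i unfolding S_def blk_supp_def by blast
    then show ?thesis by blast
  qed
  have s_eq: "s = card S" by (simp add: s_def S_def)
  have s1: "real s \<ge> 1" using Sne finS s_eq by (simp add: Suc_leI card_gt_0_iff)
  define NS where "NS = {cmod (\<Sum>r<L. cnj (D r (l * d + a)) * D r (l * d + b)) | l a b.
                      l < M \<and> a < d \<and> b < d \<and> a \<noteq> b}"
  have finNS: "finite NS"
  proof -
    have "NS \<subseteq> (\<lambda>(l,a,b). cmod (\<Sum>r<L. cnj (D r (l * d + a)) * D r (l * d + b))) ` ({..<M} \<times> {..<d} \<times> {..<d})"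
      unfolding NS_def by (auto simp: image_iff) blast
    then show ?thesis by (rule finite_subset) simp
  qed
  have nu_def': "\<nu> = Max (insert 0 NS)" unfolding \<nu>_def sub_coherence_def NS_def by simp
  have nu0: "0 \<le> \<nu>" unfolding nu_def' using finNS by simp
  have nu_bnd: "cmod (?G j j k l) \<le> \<nu>" if "j < M" "k < d" "l < d" "k \<noteq> l" for j k l
  proof -
    have "cmod (?G j j k l) \<in> NS" unfolding NS_def blk_gram_def using that by blast
    then show ?thesis unfolding nu_def' using finNS by simp
  qed
  define MS where "MS = {spec_norm d (blk_gram L d D i j) / real d | i j. i < M \<and> j < M \<and> i \<noteq> j}"
  have finMS: "finite MS"
  proof -
    have "MS \<subseteq> (\<lambda>(i,j). spec_norm d (blk_gram L d D i j) / real d) ` ({..<M} \<times> {..<M})"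
      unfolding MS_def by (auto simp: image_iff)
    then show ?thesis by (rule finite_subset) simp
  qed
  have mu_def': "\<mu>B = Max (insert 0 MS)" unfolding \<mu>B_def block_coherence_def MS_def by simp
  have mu0: "0 \<le> \<mu>B" unfolding mu_def' using finMS by simp
  have mu_bnd: "spec_norm d (?G j i) \<le> real d * \<mu>B" if "j < M" "i < M" "i \<noteq> j" for i j
  proof -
    have "spec_norm d (?G j i) / real d \<in> MS" unfolding MS_def using that by blast
    then have "spec_norm d (?G j i) / real d \<le> \<mu>B" unfolding mu_def' using finMS by simp
    then show ?thesis using assms(9) by (simp add: field_simps)
  qed
  have xmax_def': "xmax = Max (?nx ` S)" unfolding xmax_def S_def by simp
  have xmin_def': "xmin = Min (?nx ` S)" unfolding xmin_def S_def by simp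
  have nx_le: "?nx i \<le> xmax" if "i \<in> S" for i unfolding xmax_def' using finS that by simp
  have nx_ge: "xmin \<le> ?nx i" if "i \<in> S" for i unfolding xmin_def' using finS that by simp
  have xmax0: "0 \<le> xmax" using nx_le nrm_nonneg Sne by (meson equals0I order_trans)
  have "xmax \<in> ?nx ` S" unfolding xmax_def' using finS Sne by (intro Max_in) auto
  then obtain j0 where j0: "j0 \<in> S" "?nx j0 = xmax" by (metis imageE)
  have dec: "blk_adj_vec L d D j y
      = (\<lambda>k. (\<Sum>i\<in>S. app d (?G j i) (blk d x i) k) + blk_adj_vec L d D j w k)" for j
    unfolding y_def by (rule decomp[where M=M and d=d and x=x, OF Ssub zero])
  have cross: "vec2norm d (\<lambda>k. \<Sum>i\<in>T. app d (?G j i) (blk d x i) k) \<le> real (card T) * (real d * \<mu>B * xmax)"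
    if "T \<subseteq> S" "j < M" "j \<notin> T" for T j
  proof -
    have finT: "finite T" using that finS finite_subset by blast
    have "vec2norm d (\<lambda>k. \<Sum>i\<in>T. app d (?G j i) (blk d x i) k) \<le> (\<Sum>i\<in>T. vec2norm d (app d (?G j i) (blk d x i)))"
      by (rule nrm_sum[OF finT])
    also have "\<dots> \<le> (\<Sum>i\<in>T. real d * \<mu>B * xmax)"
    proof (rule sum_mono)
      fix i assume i: "i \<in> T"
      then have iM: "i < M" "i \<noteq> j" "i \<in> S" using that Ssub by auto
      have "vec2norm d (app d (?G j i) (blk d x i)) \<le> spec_norm d (?G j i) * ?nx i" by (rule app_bound)
      also have "\<dots> \<le> (real d * \<mu>B) * xmax"
        using mu_bnd[OF that(2) iM(1,2)] nx_le[OF iM(3)] nrm_nonneg[of d "blk d x i"] mu0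
        by (intro mult_mono) simp_all
      finally show "vec2norm d (app d (?G j i) (blk d x i)) \<le> real d * \<mu>B * xmax" by simp
    qed
    also have "\<dots> = real (card T) * (real d * \<mu>B * xmax)" by simp
    finally show ?thesis .
  qed
  define P where "P = real d * \<mu>B * xmax"
  have P0: "0 \<le> P" unfolding P_def using mu0 xmax0 by simp
  have upper: "?f j < real s * P + \<tau>" if "j < M" "j \<notin> S" for j
  proof -
    have "?f j \<le> vec2norm d (\<lambda>k. \<Sum>i\<in>S. app d (?G j i) (blk d x i) k) + vec2norm d (blk_adj_vec L d D j w)"
      unfolding dec by (rule nrm_add)
    also have "\<dots> < real s * P + \<tau>"
      using cross[of S j] that noise s_eq unfolding P_def by (intro add_le_less_mono) auto
    finally show ?thesis .
  qed
  have lower: "?f j > (1 - (real d - 1) * \<nu>) * ?nx j - (real s - 1) * P - \<tau>" if jS: "j \<in> S" for j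
  proof -
    have jM: "j < M" using jS Ssub by auto
    define E where "E = (\<lambda>k. \<Sum>l\<in>{..<d}-{k}. ?G j j k l * blk d x j l)"
    define C where "C = (\<lambda>k. \<Sum>i\<in>S-{j}. app d (?G j i) (blk d x i) k)"
    define W where "W = blk_adj_vec L d D j w"
    have diag: "?G j j k k = 1" if "k < d" for k
    proof -
      have c1: "j * d + k < j * d + d" using that by simp
      have c2: "(j + 1) * d \<le> M * d" using jM by (intro mult_le_mono1) simp
      have c: "j * d + k < N" unfolding N_def using c1 c2 by simp
      have "?G j j k k = (\<Sum>r<L. complex_of_real ((cmod (D r (j*d+k)))\<^sup>2))"
        unfolding blk_gram_def by (intro sum.cong refl) (rule cnj_self)
      also have "\<dots> = complex_of_real (\<Sum>r<L. (cmod (D r (j*d+k)))\<^sup>2)" by simp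
      also have "\<dots> = 1" using unit_cols c by simp
      finally show ?thesis .
    qed
    have appjj: "app d (?G j j) (blk d x j) k = blk d x j k + E k" if "k < d" for k
    proof -
      have "app d (?G j j) (blk d x j) k = ?G j j k k * blk d x j k + E k"
        unfolding app_def E_def using that by (simp add: sum.remove)
      then show ?thesis using diag[OF that] by simp
    qed
    have fj: "?f j = vec2norm d (\<lambda>k. blk d x j k + (E k + (C k + W k)))"
    proof -
      have "?f j = vec2norm d (\<lambda>k. (\<Sum>i\<in>S. app d (?G j i) (blk d x i) k) + W k)"
        unfolding dec W_def by simp
      also have "\<dots> = vec2norm d (\<lambda>k. blk d x j k + (E k + (C k + W k)))"
      proof (rule nrm_cong)
        fix k assume k: "k < d"
        have "(\<Sum>i\<in>S. app d (?G j i) (blk d x i) k) = app d (?G j j) (blk d x j) k + C k"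
          unfolding C_def using finS jS by (simp add: sum.remove)
        then show "(\<Sum>i\<in>S. app d (?G j i) (blk d x i) k) + W k = blk d x j k + (E k + (C k + W k))"
          using appjj[OF k] by simp
      qed
      finally show ?thesis .
    qed
    have E_bnd: "vec2norm d E \<le> (real d - 1) * \<nu> * ?nx j"
      unfolding E_def by (rule offdiag[OF nu_bnd[OF jM] nu0])
    have cardSj: "card (S - {j}) = s - 1" using jS finS s_eq by simp
    have C_bnd: "vec2norm d C \<le> (real s - 1) * P"
      using cross[of "S - {j}" j] jM cardSj s1 unfolding C_def P_def by (simp add: of_nat_diff)
    have W_bnd: "vec2norm d W < \<tau>" unfolding W_def using noise jM by simp
    have "?nx j \<le> ?f j + vec2norm d (\<lambda>k. E k + (C k + W k))"
      unfolding fj by (rule nrm_sub)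
    moreover have "vec2norm d (\<lambda>k. E k + (C k + W k)) \<le> vec2norm d E + (vec2norm d C + vec2norm d W)"
      using nrm_add[of d E "\<lambda>k. C k + W k"] nrm_add[of d C W] by linarith
    ultimately have "?nx j < ?f j + (real d - 1) * \<nu> * ?nx j + (real s - 1) * P + \<tau>"
      using E_bnd C_bnd W_bnd by linarith
    then show ?thesis by (simp add: algebra_simps)
  qed
  have eq1: "(2 * real s - 1) * real d * \<mu>B * xmax = 2 * (real s * P) - P" unfolding P_def by (simp add: algebra_simps)
  have eq2: "(real s - 1) * P = real s * P - P" by (simp add: algebra_simps)
  have sP0: "0 \<le> real s * P" using P0 s1 by simp
  have finA: "finite ({..<M} - S)" by simp
  have max0_lt: "max0 ({..<M} - S) ?f < B" if B: "B > real s * P + \<tau>" for B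
  proof -
    have "\<forall>a\<in>insert 0 (?f ` ({..<M} - S)). a < B"
    proof
      fix a assume "a \<in> insert 0 (?f ` ({..<M} - S))"
      then consider "a = 0" | j where "j < M" "j \<notin> S" "a = ?f j" by auto
      then show "a < B"
      proof cases
        case 1 then show ?thesis using B sP0 tau_pos by linarith
      next
        case 2 then show ?thesis using upper[OF 2(1,2)] B by linarith
      qed
    qed
    then show ?thesis unfolding max0_def using finA by (subst Max_less_iff) auto
  qed
  show ?thesis
  proof (intro conjI impI)
    assume h: "(1 - (real d - 1) * \<nu>) * xmax > 2 * \<tau> + (2 * real s - 1) * real d * \<mu>B * xmax"
    have lj0: "(1 - (real d - 1) * \<nu>) * xmax - (real s - 1) * P - \<tau> < ?f j0"
      using lower[OF j0(1)] j0(2) by simp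
    have "?f j0 > real s * P + \<tau>" using lj0 h eq1 eq2 by linarith
    moreover have "?f j0 \<le> Max (?f ` S)" using finS j0(1) by simp
    ultimately have "Max (?f ` S) > real s * P + \<tau>" by linarith
    then show "Max (?f ` S) > max0 ({..<M} - S) ?f" by (rule max0_lt)
  next
    assume h: "(1 - (real d - 1) * \<nu>) * xmin > 2 * \<tau> + (2 * real s - 1) * real d * \<mu>B * xmax"
    have xmin0: "0 \<le> xmin" using nx_ge[OF j0(1)] nrm_nonneg
      unfolding xmin_def' using finS Sne by (simp add: Min_ge_iff nrm_nonneg)
    have rhs0: "2 * \<tau> + (2 * real s - 1) * real d * \<mu>B * xmax > 0" using eq1 sP0 P0 tau_pos s1
      using mult_right_mono[OF s1 P0] by linarith
    have coef: "1 - (real d - 1) * \<nu> > 0"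
    proof (rule ccontr)
      assume "\<not> ?thesis"
      then have "(1 - (real d - 1) * \<nu>) * xmin \<le> 0" using xmin0 by (simp add: mult_nonpos_nonneg)
      then show False using h rhs0 by linarith
    qed
    have all: "?f j > real s * P + \<tau>" if jS: "j \<in> S" for j
    proof -
      have "(1 - (real d - 1) * \<nu>) * xmin \<le> (1 - (real d - 1) * \<nu>) * ?nx j"
        using coef nx_ge[OF jS] by (intro mult_left_mono) simp_all
      then show ?thesis using lower[OF jS] h eq1 eq2 by linarith
    qed
    have "max0 ({..<M} - S) ?f < Min (?f ` S)"
      using finS Sne by (subst Min_gr_iff) (auto intro: max0_lt all)
    then show "Min (?f ` S) > max0 ({..<M} - S) ?f" by simp
  qed
qed

end
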